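(* For every permutation $\sigma$ and every Cayley permutation $y$, $$\mathcal{S}(\sigma)=\gamma\bigl(X[\sigma^{-1}]\bigr)\qquad\text{and}\qquad\gamma\bigl(X[y]\bigr)=\mathcal{S}\bigl(\gamma(y)\bigr).$$
   Context: A Cayley permutation of length $n$ is a word of positive integers in which every integer from $1$ to its maximum occurs. Containment $y\le x$: indices $i_1<\dots<i_k$ ($k$ the length of $y$) with $x(i_s)<x(i_t)\iff y(s)<y(t)$ and $x(i_s)=x(i_t)\iff y(s)=y(t)$; otherwise $x$ avoids $y$. $\mathcal{S}$ is the set of permutations, $\mathcal{S}(\tau)$ those avoiding $\tau$. For $x$ of length $n$, $\gamma(x)$ is the permutation obtained by sorting the pairs $(x(i),i)$ increasingly by first coordinate, ties by decreasing second coordinate, and reading the second coordinates; $\gamma(E)=\{\gamma(x):x\in E\}$. $x\sim y$ iff $\gamma(x)=\gamma(y)$, $[y]$ is the class of $y$, and $E[y]$ is the set of elements of $E$ avoiding every element of $[y]$. The map $\eta$: for $\pi\in\mathcal{S}_n$ and $i\in[n]$, let $J(i)=0$ if $\pi(i)=1$ and otherwise let $J(i)$ be the index with $\pi(J(i))=\pi(i)-1$. The sites of $\pi$ are the site before $\pi(1)$ and the site after $\pi(i)$ for each $i\in[n]$. The site before $\pi(1)$ is $\eta$-active; the site after $\pi(i)$ is $\eta$-active iff $J(i)<i$, or $i<n$ and $\pi(i)<\pi(i+1)$. Define $\tilde\upsilon(\pi)(j)$ to be the number of $\eta$-active sites to the left of $\pi(j)$ (so consecutive active sites are numbered $1,2,\dots$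 and entries between active sites $k$ and $k+1$ get label $k$). Then $\eta(\pi)$ is the word of length $n$ with $\eta(\pi)(\pi(j))=\tilde\upsilon(\pi)(j)$ for all $j$, i.e. $\eta(\pi)=\tilde\upsilon(\pi)\circ\pi^{-1}$. Let $X=\eta(\mathcal{S})$. *)

theory Defs
  imports Main "HOL-Library.Product_Lexorder"
begin

(* Words are lists of naturals; position i (1-based in the paper) is list index i-1. *)

definition cayley :: "nat list \<Rightarrow> bool" where
  "cayley x \<longleftrightarrow> (\<forall>v\<in>set x. 1 \<le> v) \<and> (\<forall>k. 1 \<le> k \<and> k \<le> Max (insert 0 (set x)) \<longrightarrow> k \<in> set x)"

definition is_perm :: "nat list \<Rightarrow> bool" where
  "is_perm x \<longleftrightarrow> cayley x \<and> distinct x"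

definition contains :: "nat list \<Rightarrow> nat list \<Rightarrow> bool" where
  "contains x y \<longleftrightarrow> (\<exists>idx :: nat list. length idx = length y \<and> sorted_wrt (<) idx
      \<and> (\<forall>i\<in>set idx. i < length x)
      \<and> (\<forall>s<length y. \<forall>t<length y.
            (x ! (idx ! s) < x ! (idx ! t) \<longleftrightarrow> y ! s < y ! t)
          \<and> (x ! (idx ! s) = x ! (idx ! t) \<longleftrightarrow> y ! s = y ! t)))"

definition avoids :: "nat list \<Rightarrow> nat list \<Rightarrow> bool" where
  "avoids x y \<longleftrightarrow> \<not> contains x y"

definition Av_perm :: "nat list \<Rightarrow> nat list set" where
  "Av_perm \<tau> = {\<pi>. is_perm \<pi> \<and> avoids \<pi> \<tau>}"

definition gamma :: "nat list \<Rightarrow> nat list" where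
  "gamma x = map snd (sort_key (\<lambda>(v, i). (v, - int i)) (zip x [1..<Suc (length x)]))"

definition pos :: "nat list \<Rightarrow> nat \<Rightarrow> nat" where
  "pos \<pi> v = Suc (LEAST i. i < length \<pi> \<and> \<pi> ! i = v)"

definition inv_perm :: "nat list \<Rightarrow> nat list" where
  "inv_perm \<sigma> = map (pos \<sigma>) [1..<Suc (length \<sigma>)]"

definition etaJ :: "nat list \<Rightarrow> nat \<Rightarrow> nat" where
  "etaJ \<pi> i = (if \<pi> ! (i - 1) = 1 then 0 else pos \<pi> (\<pi> ! (i - 1) - 1))"

definition eta_active :: "nat list \<Rightarrow> nat \<Rightarrow> bool" where
  "eta_active \<pi> i \<longleftrightarrow> etaJ \<pi> i < i \<or> (i < length \<pi> \<and> \<pi> ! (i - 1) < \<pi> ! i)"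

(* number of eta-active sites to the left of pi(j): the initial site plus active sites after pi(i), i<j *)
definition upsilon :: "nat list \<Rightarrow> nat \<Rightarrow> nat" where
  "upsilon \<pi> j = Suc (card {i. 1 \<le> i \<and> i < j \<and> eta_active \<pi> i})"

(* eta(pi)(pi(j)) = upsilon(pi)(j) *)
definition eta :: "nat list \<Rightarrow> nat list" where
  "eta \<pi> = map (\<lambda>k. upsilon \<pi> (pos \<pi> k)) [1..<Suc (length \<pi>)]"

definition Xset :: "nat list set" where
  "Xset = eta ` {\<pi>. is_perm \<pi>}"

definition cls :: "nat list \<Rightarrow> nat list set" where
  "cls y = {z. cayley z \<and> gamma z = gamma y}"

definition avoid_class :: "nat list set \<Rightarrow> nat list \<Rightarrow> nat list set" where
  "avoid_class E y = {x\<in>E. \<forall>z\<in>cls y. avoids x z}"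

end

theory Submission
  imports Defs
begin

definition K :: "nat list \<Rightarrow> nat \<Rightarrow> nat \<times> int" where
  "K x i = (x ! (i - 1), - int i)"

lemma insort_map_gen: "insort_key f (g a) (map g xs) = map g (insort_key (\<lambda>a. f (g a)) a xs)"
  by (induction xs) auto

lemma sort_key_map_gen: "sort_key f (map g xs) = map g (sort_key (\<lambda>a. f (g a)) xs)"
  by (induction xs) (auto simp: insort_map_gen)

lemma insort_key_cong: "(\<And>z. z \<in> insert a (set ys) \<Longrightarrow> f z = g z) \<Longrightarrow> insort_key f a ys = insort_key g a ys"
  by (induction ys) auto

lemma sort_key_cong: "(\<And>z. z \<in> set xs \<Longrightarrow> f z = g z) \<Longrightarrow> sort_key f xs = sort_key g xs"
proof (induction xs)
  case Nil then show ?case by simp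
next
  case (Cons a xs)
  then have "sort_key f xs = sort_key g xs" by auto
  moreover have "insort_key f a (sort_key g xs) = insort_key g a (sort_key g xs)"
    by (rule insort_key_cong) (use Cons.prems in auto)
  ultimately show ?case by simp
qed

lemma gamma_alt: "gamma x = sort_key (K x) [1..<Suc (length x)]"
proof -
  have z: "zip x [1..<Suc (length x)] = map (\<lambda>i. (x ! (i - 1), i)) [1..<Suc (length x)]"
    by (rule nth_equalityI) (auto simp del: upt_Suc)
  have "sort_key (\<lambda>(v, i). (v, - int i)) (zip x [1..<Suc (length x)])
      = map (\<lambda>i. (x ! (i - 1), i)) (sort_key (\<lambda>i. (\<lambda>(v, i). (v, - int i)) ((\<lambda>i. (x ! (i - 1), i)) i)) [1..<Suc (length x)])"
    unfolding z by (rule sort_key_map_gen)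
  also have "(\<lambda>i. (\<lambda>(v, i). (v, - int i)) ((\<lambda>i. (x ! (i - 1), i)) i)) = K x"
    by (auto simp: K_def)
  finally show ?thesis unfolding gamma_def by (simp add: comp_def)
qed

lemma K_inj: "inj (K x)"
  by (auto simp: K_def inj_def)

lemma gamma_sorted: "sorted_wrt (\<lambda>a b. K x a < K x b) (gamma x)"
proof -
  have "sorted (map (K x) (gamma x))" unfolding gamma_alt by simp
  moreover have "distinct (map (K x) (gamma x))"
    unfolding gamma_alt using K_inj by (simp add: distinct_map inj_on_def inj_def)
  ultimately have "sorted_wrt (<) (map (K x) (gamma x))" by (simp add: strict_sorted_iff)
  then show ?thesis by (simp add: sorted_wrt_map)
qed

lemma gamma_set: "set (gamma x) = {1..length x}"
  unfolding gamma_alt by auto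

lemma gamma_distinct: "distinct (gamma x)"
  unfolding gamma_alt by simp

lemma gamma_length: "length (gamma x) = length x"
  unfolding gamma_alt by (simp del: upt_Suc)

lemma key_unique:
  fixes f :: "'a \<Rightarrow> 'b::linorder"
  assumes "sorted_wrt (\<lambda>a b. f a < f b) L1" "sorted_wrt (\<lambda>a b. f a < f b) L2" "set L1 = set L2"
  shows "L1 = L2"
proof -
  have 1: "sorted_wrt (<) (map f L1)" "sorted_wrt (<) (map f L2)"
    using assms by (simp_all add: sorted_wrt_map)
  then have 2: "sorted (map f L1)" "distinct (map f L1)" "sorted (map f L2)" "distinct (map f L2)"
    by (simp_all add: strict_sorted_iff)
  have "inj_on f (set L1 \<union> set L2)" using 2 assms(3) by (simp add: distinct_map)
  then show ?thesis using map_sorted_distinct_set_unique[OF _ 2 assms(3)] by blast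
qed

lemma gamma_unique:
  assumes "set L = {1..length x}" "sorted_wrt (\<lambda>a b. K x a < K x b) L"
  shows "gamma x = L"
  using key_unique[OF gamma_sorted assms(2)] assms(1) gamma_set by simp

definition oiso :: "nat list \<Rightarrow> nat list \<Rightarrow> bool" where
  "oiso a b \<longleftrightarrow> length a = length b \<and> (\<forall>s<length a. \<forall>t<length a.
      (a ! s < a ! t \<longleftrightarrow> b ! s < b ! t) \<and> (a ! s = a ! t \<longleftrightarrow> b ! s = b ! t))"

lemma contains_iff: "contains x y \<longleftrightarrow> (\<exists>idx. sorted_wrt (<) idx \<and> (\<forall>i\<in>set idx. i < length x)
   \<and> oiso (map (nth x) idx) y)"
  unfolding contains_def oiso_def by auto

lemma oiso_sym: "oiso a b \<Longrightarrow> oiso b a"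
  unfolding oiso_def by auto

lemma oiso_trans: "oiso a b \<Longrightarrow> oiso b c \<Longrightarrow> oiso a c"
  unfolding oiso_def by auto

lemma oiso_map: "strict_mono_on (set a) h \<Longrightarrow> oiso a (map h a)"
  unfolding oiso_def
  by (auto simp: strict_mono_on_def) (metis linorder_neqE nth_mem order.asym)+

lemma gamma_oiso: assumes "oiso a b" shows "gamma a = gamma b"
proof (rule gamma_unique[symmetric])
  have l: "length a = length b" using assms by (simp add: oiso_def)
  show "set (gamma a) = {1..length b}" using l gamma_set by simp
  show "sorted_wrt (\<lambda>i j. K b i < K b j) (gamma a)"
  proof (rule sorted_wrt_mono_rel[OF _ gamma_sorted])
    fix i j assume "i \<in> set (gamma a)" "j \<in> set (gamma a)" "K a i < K a j"
    then obtain s t where st: "i = Suc s" "j = Suc t" "s < length b" "t < length b"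
      using l unfolding gamma_set by (metis Suc_le_eq atLeastAtMost_iff not0_implies_Suc not_one_le_zero)
    have "(a ! s < a ! t) = (b ! s < b ! t) \<and> (a ! s = a ! t) = (b ! s = b ! t)"
      using assms st l unfolding oiso_def by auto
    then show "K b i < K b j" using \<open>K a i < K a j\<close> unfolding K_def st by auto

  qed
qed

lemma strict_nth_mono:
  fixes J :: "nat list"
  assumes "sorted_wrt (<) J" "i < length J" "j < length J"
  shows "J ! i < J ! j \<longleftrightarrow> i < j"
proof
  assume a: "J ! i < J ! j"
  show "i < j"
  proof (rule ccontr)
    assume "\<not> i < j"
    then have "j < i \<or> i = j" by auto
    then show False
    proof
      assume "j < i" then have "J ! j < J ! i" using assms by (simp add: sorted_wrt_iff_nth_less)
      then show False using a by simp
    next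
      assume "i = j" then show False using a by simp
    qed
  qed
next
  assume "i < j" then show "J ! i < J ! j" using assms by (simp add: sorted_wrt_iff_nth_less)
qed

lemma gamma_restrict:
  assumes J: "sorted_wrt (<) J" "\<forall>j\<in>set J. j < length x"
  shows "filter (\<lambda>v. v - 1 \<in> set J) (gamma x) = map (\<lambda>v. Suc (J ! (v - 1))) (gamma (map (nth x) J))"
proof (rule key_unique[where f = "K x"])
  show "sorted_wrt (\<lambda>a b. K x a < K x b) (filter (\<lambda>v. v - 1 \<in> set J) (gamma x))"
    by (rule sorted_wrt_filter[OF gamma_sorted])
  let ?w = "map (nth x) J"
  have "sorted_wrt (\<lambda>a b. K x (Suc (J ! (a - 1))) < K x (Suc (J ! (b - 1)))) (gamma ?w)"
  proof (rule sorted_wrt_mono_rel[OF _ gamma_sorted])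
    fix a b assume ab: "a \<in> set (gamma ?w)" "b \<in> set (gamma ?w)" "K ?w a < K ?w b"
    then obtain s t where st: "a = Suc s" "b = Suc t" "s < length J" "t < length J"
      unfolding gamma_set by (metis Suc_le_eq atLeastAtMost_iff length_map not0_implies_Suc not_one_le_zero)
    have m: "J ! s < J ! t \<longleftrightarrow> s < t" using strict_nth_mono[OF J(1) st(3,4)] .
    have m2: "J ! t < J ! s \<longleftrightarrow> t < s" using strict_nth_mono[OF J(1) st(4,3)] .
    show "K x (Suc (J ! (a - 1))) < K x (Suc (J ! (b - 1)))"
      using ab(3) m m2 st unfolding K_def by auto
  qed
  then show "sorted_wrt (\<lambda>a b. K x a < K x b) (map (\<lambda>v. Suc (J ! (v - 1))) (gamma ?w))"
    by (simp add: sorted_wrt_map)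
  have "set (map (\<lambda>v. Suc (J ! (v - 1))) (gamma ?w)) = (\<lambda>v. Suc (J ! (v - 1))) ` {1..length J}"
    by (simp add: gamma_set)
  also have "\<dots> = Suc ` set J"
  proof -
    have "(\<lambda>v. Suc (J ! (v - 1))) ` {1..length J} = Suc ` ((nth J) ` {..<length J})"
    proof -
      have "{1..length J} = Suc ` {..<length J}" by (simp add: atLeast1_atMost_eq_remove0 lessThan_atLeast0 image_Suc_atLeastLessThan atLeastLessThanSuc_atLeastAtMost)
      then show ?thesis by (simp add: image_image)
    qed
    also have "(nth J) ` {..<length J} = set J" by (auto simp: in_set_conv_nth)
    finally show ?thesis .
  qed
  also have "\<dots> = set (filter (\<lambda>v. v - 1 \<in> set J) (gamma x))"
  proof
    show "Suc ` set J \<subseteq> set (filter (\<lambda>v. v - 1 \<in> set J) (gamma x))"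
      using J(2) unfolding set_filter gamma_set by auto
    show "set (filter (\<lambda>v. v - 1 \<in> set J) (gamma x)) \<subseteq> Suc ` set J"
    proof
      fix v assume "v \<in> set (filter (\<lambda>v. v - 1 \<in> set J) (gamma x))"
      then have "1 \<le> v" "v - 1 \<in> set J" unfolding set_filter gamma_set by auto
      then have "v = Suc (v - 1)" "v - 1 \<in> set J" by auto
      then show "v \<in> Suc ` set J" by (metis image_eqI)
    qed
  qed
  finally show "set (filter (\<lambda>v. v - 1 \<in> set J) (gamma x)) = set (map (\<lambda>v. Suc (J ! (v - 1))) (gamma ?w))" ..
qed

lemma perm_card:
  assumes "distinct p" "set p = {1..length p}" "s < length p"
  shows "card {t. t < length p \<and> p ! t \<le> p ! s} = p ! s"
proof -
  have "nth p ` {t. t < length p \<and> p ! t \<le> p ! s} = {v \<in> set p. v \<le> p ! s}"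
    by (auto simp: in_set_conv_nth)
  also have "\<dots> = {1..p ! s}" using assms nth_mem[OF assms(3)] by auto
  finally have e: "nth p ` {t. t < length p \<and> p ! t \<le> p ! s} = {1..p ! s}" .
  have "inj_on (nth p) {t. t < length p \<and> p ! t \<le> p ! s}"
    using inj_on_nth[OF assms(1)] by auto
  then show ?thesis using card_image e by fastforce
qed

lemma perm_oiso_eq:
  assumes "distinct p" "set p = {1..length p}" "distinct q" "set q = {1..length q}" "oiso p q"
  shows "p = q"
proof (rule nth_equalityI)
  show l: "length p = length q" using assms(5) by (simp add: oiso_def)
  fix s assume s: "s < length p"
  have "{t. t < length p \<and> p ! t \<le> p ! s} = {t. t < length q \<and> q ! t \<le> q ! s}"
    using assms(5) s l unfolding oiso_def le_less by auto
  moreover have "card {t. t < length q \<and> q ! t \<le> q ! s} = q ! s"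
    using perm_card[OF assms(3,4)] s l by simp
  ultimately show "p ! s = q ! s" using perm_card[OF assms(1,2) s] by simp
qed

lemma filter_nth: "filter P L = map (nth L) (filter (\<lambda>i. P (L ! i)) [0..<length L])"
proof (induction L rule: rev_induct)
  case Nil then show ?case by simp
next
  case (snoc a L)
  have "filter (\<lambda>i. P ((L @ [a]) ! i)) [0..<length L] = filter (\<lambda>i. P (L ! i)) [0..<length L]"
    by (rule filter_cong) (auto simp: nth_append)
  moreover have "map (nth (L @ [a])) (filter (\<lambda>i. P (L ! i)) [0..<length L]) = map (nth L) (filter (\<lambda>i. P (L ! i)) [0..<length L])"
    by (rule map_cong) (auto simp: nth_append)
  ultimately show ?case using snoc by simp
qed

lemma filter_upt_strict: "sorted_wrt (<) (filter P [0..<n])"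
  by (rule sorted_wrt_filter) simp

lemma filter_idx:
  assumes "distinct g" "sorted_wrt (<) idx" "\<forall>i\<in>set idx. i < length g"
  shows "filter (\<lambda>v. v \<in> set (map (nth g) idx)) g = map (nth g) idx"
proof -
  have "filter (\<lambda>i. g ! i \<in> set (map (nth g) idx)) [0..<length g] = filter (\<lambda>i. i \<in> set idx) [0..<length g]"
  proof (rule filter_cong)
    fix i assume "i \<in> set [0..<length g]"
    then show "(g ! i \<in> set (map (nth g) idx)) = (i \<in> set idx)"
      using assms(1,3) by (auto simp: nth_eq_iff_index_eq)
  qed simp
  also have "\<dots> = idx"
    by (rule key_unique[where f = id]) (use assms filter_upt_strict in \<open>auto\<close>)
  finally show ?thesis by (subst filter_nth) simp
qed

definition std :: "nat list \<Rightarrow> nat list" where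
  "std w = map (\<lambda>v. card {u \<in> set w. u \<le> v}) w"

lemma cayley_of_set: assumes "set z = {1..m}" shows "cayley z"
proof -
  have Mle: "Max (insert 0 (set z)) \<le> m" unfolding assms by (rule Max.boundedI) auto
  have "k \<in> set z" if "1 \<le> k" "k \<le> Max (insert 0 (set z))" for k
  proof -
    have "k \<le> m" using le_trans[OF that(2) Mle] .
    then show ?thesis using that(1) assms by simp
  qed
  moreover have "\<forall>v\<in>set z. 1 \<le> v" using assms by simp
  ultimately show ?thesis unfolding cayley_def by blast
qed

lemma std_props: "cayley (std w) \<and> oiso w (std w)"
proof -
  let ?r = "\<lambda>v. card {u \<in> set w. u \<le> v}"
  have sm: "strict_mono_on (set w) ?r"
  proof (rule strict_mono_onI)
    fix a b assume "a \<in> set w" "b \<in> set w" "a < b"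
    then have "b \<in> {u \<in> set w. u \<le> b}" "b \<notin> {u \<in> set w. u \<le> a}" by auto
    moreover have "{u \<in> set w. u \<le> a} \<subseteq> {u \<in> set w. u \<le> b}" using \<open>a < b\<close> by auto
    ultimately have "{u \<in> set w. u \<le> a} \<subset> {u \<in> set w. u \<le> b}" by blast
    then show "?r a < ?r b" by (rule psubset_card_mono[rotated]) simp
  qed
  have sub: "?r ` set w \<subseteq> {1..card (set w)}"
  proof
    fix y assume "y \<in> ?r ` set w"
    then obtain v where v: "v \<in> set w" "y = ?r v" by blast
    have "{u \<in> set w. u \<le> v} \<noteq> {}" using v by auto
    then have "1 \<le> ?r v" by (simp add: Suc_leI card_gt_0_iff)
    moreover have "?r v \<le> card (set w)" by (rule card_mono) auto
    ultimately show "y \<in> {1..card (set w)}" using v by simp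
  qed
  have "card (?r ` set w) = card (set w)"
    using card_image[OF strict_mono_on_imp_inj_on[OF sm]] .
  then have "?r ` set w = {1..card (set w)}" using sub by (simp add: card_subset_eq)
  then have "cayley (std w)" unfolding std_def by (intro cayley_of_set[where m="card (set w)"]) simp
  moreover have "oiso w (std w)" unfolding std_def by (rule oiso_map[OF sm])
  ultimately show ?thesis by blast
qed


lemma strict_mono_h:
  assumes "sorted_wrt (<) J"
  shows "strict_mono_on {1..length J} (\<lambda>v. Suc (J ! (v - 1)))"
proof (rule strict_mono_onI)
  fix a b assume "a \<in> {1..length J}" "b \<in> {1..length J}" "a < b"
  then show "Suc (J ! (a - 1)) < Suc (J ! (b - 1))"
    using strict_nth_mono[OF assms, of "a - 1" "b - 1"] by auto
qed

lemma transfer_fwd: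
  assumes "z \<in> cls y" "contains x z"
  shows "contains (gamma x) (gamma y)"
proof -
  obtain J where J: "sorted_wrt (<) J" "\<forall>i\<in>set J. i < length x" "oiso (map (nth x) J) z"
    using assms(2) unfolding contains_iff by blast
  let ?w = "map (nth x) J" let ?h = "\<lambda>v. Suc (J ! (v - 1))"
  have gw: "gamma ?w = gamma y" using gamma_oiso[OF J(3)] assms(1) unfolding cls_def by simp
  have f: "filter (\<lambda>v. v - 1 \<in> set J) (gamma x) = map ?h (gamma y)"
    using gamma_restrict[OF J(1,2)] gw by simp
  let ?I = "filter (\<lambda>i. (gamma x ! i) - 1 \<in> set J) [0..<length (gamma x)]"
  have "map (nth (gamma x)) ?I = filter (\<lambda>v. v - 1 \<in> set J) (gamma x)" by (rule filter_nth[symmetric])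
  then have "map (nth (gamma x)) ?I = map ?h (gamma y)" using f by simp
  moreover have "oiso (gamma y) (map ?h (gamma y))"
  proof (rule oiso_map)
    have "set (gamma y) = {1..length J}"
      using gamma_set[of y] gamma_set[of ?w] gw by simp
    then show "strict_mono_on (set (gamma y)) ?h" using strict_mono_h[OF J(1)] by simp
  qed
  ultimately have "oiso (map (nth (gamma x)) ?I) (gamma y)" by (simp add: oiso_sym)
  moreover have "sorted_wrt (<) ?I" by (rule filter_upt_strict)
  moreover have "\<forall>i\<in>set ?I. i < length (gamma x)" by simp
  ultimately show ?thesis unfolding contains_iff by blast
qed

lemma transfer_bwd:
  assumes "contains (gamma x) (gamma y)"
  shows "\<exists>z\<in>cls y. contains x z"
proof -
  let ?g = "gamma x"
  obtain I where I: "sorted_wrt (<) I" "\<forall>i\<in>set I. i < length ?g" "oiso (map (nth ?g) I) (gamma y)"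
    using assms unfolding contains_iff by blast
  define V where "V = set (map (nth ?g) I)"
  define J where "J = filter (\<lambda>j. Suc j \<in> V) [0..<length x]"
  have J: "sorted_wrt (<) J" "\<forall>i\<in>set J. i < length x" unfolding J_def
    by (simp_all add: filter_upt_strict)
  let ?w = "map (nth x) J" let ?h = "\<lambda>v. Suc (J ! (v - 1))"
  have "filter (\<lambda>v. v - 1 \<in> set J) ?g = filter (\<lambda>v. v \<in> V) ?g"
  proof (rule filter_cong)
    fix v assume "v \<in> set ?g"
    then have "1 \<le> v" "v \<le> length x" by (auto simp: gamma_set)
    then show "(v - 1 \<in> set J) = (v \<in> V)" unfolding J_def by auto
  qed simp
  also have "\<dots> = map (nth ?g) I" unfolding V_def by (rule filter_idx[OF gamma_distinct I(1,2)])
  finally have e: "map (nth ?g) I = map ?h (gamma ?w)" using gamma_restrict[OF J] by simp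
  have sw: "set (gamma ?w) = {1..length J}" by (simp add: gamma_set)
  have o1: "oiso (gamma ?w) (map ?h (gamma ?w))"
    by (rule oiso_map) (use strict_mono_h[OF J(1)] sw in simp)
  have o2: "oiso (map ?h (gamma ?w)) (gamma y)" using I(3) e by simp
  have o: "oiso (gamma ?w) (gamma y)" by (rule oiso_trans[OF o1 o2])
  then have "length (gamma ?w) = length (gamma y)" by (simp add: oiso_def)
  then have gw: "gamma ?w = gamma y"
    by (intro perm_oiso_eq[OF gamma_distinct _ gamma_distinct _ o]) (simp_all add: gamma_set gamma_length)
  obtain z where z: "z = std ?w" by blast
  have zc: "cayley z" "oiso ?w z" using std_props z by auto
  have "z \<in> cls y" unfolding cls_def using zc gamma_oiso[OF zc(2)] gw by simp
  moreover have "contains x z" unfolding contains_iff using J zc(2) by blast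
  ultimately show ?thesis by blast
qed

lemma avoid_class_alt: "avoid_class E y = {x \<in> E. \<not> contains (gamma x) (gamma y)}"
proof -
  have "(\<forall>z\<in>cls y. \<not> contains x z) \<longleftrightarrow> \<not> contains (gamma x) (gamma y)" for x
  proof
    assume "\<forall>z\<in>cls y. \<not> contains x z"
    then show "\<not> contains (gamma x) (gamma y)" using transfer_bwd[of x y] by auto
  next
    assume "\<not> contains (gamma x) (gamma y)"
    then show "\<forall>z\<in>cls y. \<not> contains x z" using transfer_fwd[of _ y x] by auto
  qed
  then show ?thesis unfolding avoid_class_def avoids_def by simp
qed

lemma is_perm_set:
  assumes "is_perm p" shows "set p = {1..length p}" "distinct p"
proof -
  define M where "M = Max (insert 0 (set p))"
  have cp: "cayley p" and d: "distinct p" using assms unfolding is_perm_def by blast+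
  have c1: "\<forall>v\<in>set p. 1 \<le> v" using cp unfolding cayley_def by blast
  have c2: "\<forall>k. 1 \<le> k \<and> k \<le> M \<longrightarrow> k \<in> set p" using cp unfolding cayley_def M_def by blast
  have c3: "\<forall>v\<in>set p. v \<le> M" unfolding M_def by (auto intro: Max_ge)
  have s: "set p = {1..M}"
  proof
    show "set p \<subseteq> {1..M}" using c1 c3 by auto
    show "{1..M} \<subseteq> set p" using c2 by auto
  qed
  have "length p = M" using distinct_card[OF d] s by simp
  then show "set p = {1..length p}" using s by simp
  show "distinct p" by fact
qed

lemma perm_is_perm: "distinct p \<Longrightarrow> set p = {1..length p} \<Longrightarrow> is_perm p"
  unfolding is_perm_def using cayley_of_set by blast

lemma gamma_is_perm: "is_perm (gamma x)"
  by (rule perm_is_perm) (simp_all add: gamma_distinct gamma_set gamma_length)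

lemma pos_nth: "distinct p \<Longrightarrow> a < length p \<Longrightarrow> pos p (p ! a) = Suc a"
  unfolding pos_def
  by (rule arg_cong[where f = Suc], rule Least_equality) (auto simp: nth_eq_iff_index_eq)

lemma ascent_exists:
  fixes p :: "nat list"
  shows "a < b \<Longrightarrow> p ! a < p ! b \<Longrightarrow> \<exists>i. a \<le> i \<and> i < b \<and> p ! i < p ! Suc i"
proof (induction b)
  case 0 then show ?case by simp
next
  case (Suc b)
  show ?case
  proof (cases "p ! b < p ! Suc b")
    case True
    have "a \<le> b" using Suc.prems(1) by simp
    then show ?thesis using True by blast
  next
    case False
    then have "a < b" using Suc.prems by (metis less_SucE)
    moreover have "p ! a < p ! b" using False Suc.prems by simp
    ultimately obtain i where "a \<le> i" "i < b" "p ! i < p ! Suc i" using Suc.IH by blast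
    then show ?thesis by (intro exI[of _ i]) simp
  qed
qed

lemma upsilon_mono: "j1 \<le> j2 \<Longrightarrow> upsilon p j1 \<le> upsilon p j2"
  unfolding upsilon_def by (auto intro!: card_mono)

lemma gamma_eta:
  assumes "is_perm p" shows "gamma (eta p) = p"
proof -
  have s: "set p = {1..length p}" and d: "distinct p" using is_perm_set[OF assms] by auto
  have le: "length (eta p) = length p" unfolding eta_def by (simp del: upt_Suc)
  have en: "eta p ! (p ! a - 1) = upsilon p (Suc a)" if "a < length p" for a
  proof -
    have "p ! a \<in> {1..length p}" using s nth_mem[OF that] by blast
    then have "eta p ! (p ! a - 1) = upsilon p (pos p (p ! a))" unfolding eta_def by (auto simp del: upt_Suc)
    then show ?thesis using pos_nth[OF d that] by simp
  qed
  show ?thesis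
  proof (rule gamma_unique)
    show "set p = {1..length (eta p)}" using s le by simp
    show "sorted_wrt (\<lambda>a b. K (eta p) a < K (eta p) b) p"
      unfolding sorted_wrt_iff_nth_less
    proof (intro allI impI)
      fix a b assume ab: "a < b" "b < length p"
      have ne: "p ! a \<noteq> p ! b" using d ab by (simp add: nth_eq_iff_index_eq)
      have "upsilon p (Suc a) < upsilon p (Suc b)" if lt: "p ! a < p ! b"
      proof -
        obtain i where i: "a \<le> i" "i < b" "p ! i < p ! Suc i" using ascent_exists[OF ab(1) lt] by blast
        have act: "eta_active p (Suc i)" unfolding eta_active_def using i ab by simp
        have "{i. 1 \<le> i \<and> i < Suc a \<and> eta_active p i} \<subset> {i. 1 \<le> i \<and> i < Suc b \<and> eta_active p i}"
        proof -
          have "Suc i \<in> {i. 1 \<le> i \<and> i < Suc b \<and> eta_active p i}" using act i by simp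
          moreover have "Suc i \<notin> {i. 1 \<le> i \<and> i < Suc a \<and> eta_active p i}" using i by simp
          moreover have "{i. 1 \<le> i \<and> i < Suc a \<and> eta_active p i} \<subseteq> {i. 1 \<le> i \<and> i < Suc b \<and> eta_active p i}"
            using ab by auto
          ultimately show ?thesis by blast
        qed
        then have "card {i. 1 \<le> i \<and> i < Suc a \<and> eta_active p i} < card {i. 1 \<le> i \<and> i < Suc b \<and> eta_active p i}"
          by (rule psubset_card_mono[rotated]) simp
        then show ?thesis unfolding upsilon_def by simp
      qed
      moreover have "upsilon p (Suc a) \<le> upsilon p (Suc b)" using ab by (intro upsilon_mono) simp
      ultimately show "K (eta p) (p ! a) < K (eta p) (p ! b)"
        unfolding K_def using en[of a] en[of b] ab ne by (auto simp: linorder_neq_iff)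
    qed
  qed
qed

lemma gamma_inv_perm:
  assumes "is_perm p" shows "gamma (inv_perm p) = p"
proof -
  have s: "set p = {1..length p}" and d: "distinct p" using is_perm_set[OF assms] by auto
  have le: "length (inv_perm p) = length p" unfolding inv_perm_def by (simp del: upt_Suc)
  have en: "inv_perm p ! (p ! a - 1) = Suc a" if "a < length p" for a
  proof -
    have "p ! a \<in> {1..length p}" using s nth_mem[OF that] by blast
    then have "inv_perm p ! (p ! a - 1) = pos p (p ! a)" unfolding inv_perm_def by (auto simp del: upt_Suc)
    then show ?thesis using pos_nth[OF d that] by simp
  qed
  show ?thesis
  proof (rule gamma_unique)
    show "set p = {1..length (inv_perm p)}" using s le by simp
    show "sorted_wrt (\<lambda>a b. K (inv_perm p) a < K (inv_perm p) b) p"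
      unfolding sorted_wrt_iff_nth_less K_def using en by auto
  qed
qed

lemma main_general: "gamma ` avoid_class Xset y = Av_perm (gamma y)"
proof
  show "gamma ` avoid_class Xset y \<subseteq> Av_perm (gamma y)"
    unfolding avoid_class_alt Av_perm_def avoids_def using gamma_is_perm by auto
  show "Av_perm (gamma y) \<subseteq> gamma ` avoid_class Xset y"
  proof
    fix p assume "p \<in> Av_perm (gamma y)"
    then have p: "is_perm p" "\<not> contains p (gamma y)" unfolding Av_perm_def avoids_def by auto
    have "eta p \<in> Xset" unfolding Xset_def using p(1) by blast
    moreover have "gamma (eta p) = p" by (rule gamma_eta[OF p(1)])
    ultimately show "p \<in> gamma ` avoid_class Xset y" unfolding avoid_class_alt using p(2)
      by (metis (mono_tags, lifting) image_eqI mem_Collect_eq)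
  qed
qed

theorem theorem7p2:
  assumes "is_perm \<sigma>" and "cayley y"
  shows "Av_perm \<sigma> = gamma ` avoid_class Xset (inv_perm \<sigma>)
       \<and> gamma ` avoid_class Xset y = Av_perm (gamma y)"
  using main_general[of "inv_perm \<sigma>"] main_general[of y] gamma_inv_perm[OF assms(1)] by simp

end
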